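(* Let $(X_n)_{n\ge0}$ be a Markov chain on $\mathbb Z_+$ with transition matrix $P$. Assume that for every $i\in\mathbb Z_+$ there is a positive non-increasing function $g_i$ on $\mathbb Z_+$ such that $g_i(X_n)$ is a supermartingale (i.e. $\sum_k P(j,k)g_i(k)\le g_i(j)$ for all $j\in\mathbb Z_+$), and that $$p_1:=\sup_{i\ge1}\frac{g_i(i)}{g_i(i-1)}<1,\qquad p_2:=\inf_{i\ge0}\mathbb P_i\{X_1\ge i+1\}>0.$$ Then there exists $\gamma>0$ such that $\sup_{i\in\mathbb Z_+}\mathbb E_ie^{\gamma\ell(i)}<\infty$.
   Context: $\mathbb P_i,\mathbb E_i$ denote probability and expectation given $X_0=i$; the local time at $i$ is $\ell(i):=\sum_{n=0}^\infty\mathbf 1\{X_n=i\}$. *)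

theory Defs
  imports "HOL-Probability.Probability"
begin

definition stochastic_matrix :: "(nat \<Rightarrow> nat \<Rightarrow> real) \<Rightarrow> bool" where
  "stochastic_matrix P \<longleftrightarrow> (\<forall>j k. 0 \<le> P j k) \<and> (\<forall>j. (\<lambda>k. P j k) sums 1)"

fun path_weight :: "(nat \<Rightarrow> nat \<Rightarrow> real) \<Rightarrow> nat \<Rightarrow> nat list \<Rightarrow> real" where
  "path_weight P x [] = 1"
| "path_weight P x (y # ys) = P x y * path_weight P y ys"

text \<open>Under the probability measure M, the process X (X n : state at time n) is a Markov
  chain with transition matrix P started at X 0 = i: its finite-dimensional distributions
  are the ones of the chain.\<close>
definition markov_chain_from ::
  "(nat \<Rightarrow> nat \<Rightarrow> real) \<Rightarrow> 'a measure \<Rightarrow> (nat \<Rightarrow> 'a \<Rightarrow> nat) \<Rightarrow> nat \<Rightarrow> bool" where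
  "markov_chain_from P M X i \<longleftrightarrow>
     prob_space M \<and> (\<forall>n. X n \<in> M \<rightarrow>\<^sub>M count_space UNIV) \<and>
     (\<forall>xs. measure M {\<omega> \<in> space M. \<forall>j < length xs. X j \<omega> = xs ! j} =
        (case xs of [] \<Rightarrow> 1 | x # ys \<Rightarrow> (if x = i then path_weight P x ys else 0)))"

definition local_time :: "(nat \<Rightarrow> 'a \<Rightarrow> nat) \<Rightarrow> nat \<Rightarrow> 'a \<Rightarrow> enat" where
  "local_time X i \<omega> = (if finite {n. X n \<omega> = i} then enat (card {n. X n \<omega> = i}) else \<infinity>)"

definition exp_enat :: "real \<Rightarrow> enat \<Rightarrow> ennreal" where
  "exp_enat \<gamma> l = (case l of enat m \<Rightarrow> ennreal (exp (\<gamma> * real m)) | \<infinity> \<Rightarrow> \<infinity>)"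

end

theory Submission
  imports Defs
begin


definition nu :: "(nat \<Rightarrow> nat \<Rightarrow> real) \<Rightarrow> nat \<Rightarrow> nat \<Rightarrow> nat list set \<Rightarrow> ennreal" where
  "nu P N x T = (\<integral>\<^sup>+ ys. ennreal (path_weight P x ys) * indicator {ys. length ys = N \<and> ys \<in> T} ys \<partial>count_space UNIV)"

lemma split_len:
  "(\<integral>\<^sup>+ zs. f zs * indicator {zs. length zs = Suc N} zs \<partial>count_space UNIV) =
   (\<integral>\<^sup>+ y. \<integral>\<^sup>+ ys. f (y#ys) * indicator {ys. length ys = N} ys \<partial>count_space UNIV \<partial>count_space UNIV)"
proof -
  have "(\<integral>\<^sup>+ y. \<integral>\<^sup>+ ys. f (y#ys) * indicator {ys. length ys = N} ys \<partial>count_space UNIV \<partial>count_space UNIV)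
     = (\<integral>\<^sup>+ p. f (fst p # snd p) * indicator {ys. length ys = N} (snd p) \<partial>count_space UNIV)"
    using nn_integral_fst_count_space[of "\<lambda>p. f (fst p # snd p) * indicator {ys. length ys = N} (snd p)"] by simp
  also have "\<dots> = (\<integral>\<^sup>+ p. f (fst p # snd p) \<partial>count_space (UNIV \<times> {ys. length ys = N}))"
    by (subst nn_integral_count_space_indicator) (auto intro!: nn_integral_cong split: split_indicator)
  also have "\<dots> = (\<integral>\<^sup>+ zs. f zs \<partial>count_space {zs. length zs = Suc N})"
  proof (rule nn_integral_bij_count_space)
    show "bij_betw (\<lambda>p. fst p # snd p) (UNIV \<times> {ys. length ys = N}) {zs. length zs = Suc N}"
      unfolding bij_betw_def inj_on_def
      by (auto simp: length_Suc_conv image_iff)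
  qed
  also have "\<dots> = (\<integral>\<^sup>+ zs. f zs * indicator {zs. length zs = Suc N} zs \<partial>count_space UNIV)"
    by (simp add: nn_integral_count_space_indicator)
  finally show ?thesis ..
qed

lemma nu_Suc:
  assumes "\<And>y. 0 \<le> P x y"
  shows "nu P (Suc N) x T = (\<integral>\<^sup>+ y. ennreal (P x y) * nu P N y {ys. y#ys \<in> T} \<partial>count_space UNIV)"
proof -
  have "nu P (Suc N) x T = (\<integral>\<^sup>+ zs. (ennreal (path_weight P x zs) * indicator T zs) * indicator {zs. length zs = Suc N} zs \<partial>count_space UNIV)"
    unfolding nu_def by (intro nn_integral_cong) (auto split: split_indicator)
  also have "\<dots> = (\<integral>\<^sup>+ y. \<integral>\<^sup>+ ys. (ennreal (path_weight P x (y#ys)) * indicator T (y#ys)) * indicator {ys. length ys = N} ys \<partial>count_space UNIV \<partial>count_space UNIV)"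
    by (rule split_len)
  also have "\<dots> = (\<integral>\<^sup>+ y. ennreal (P x y) * (\<integral>\<^sup>+ ys. ennreal (path_weight P y ys) * indicator {ys. length ys = N \<and> ys \<in> {ys. y#ys \<in> T}} ys \<partial>count_space UNIV) \<partial>count_space UNIV)"
    apply (intro nn_integral_cong)
    apply (subst nn_integral_cmult[symmetric], simp)
    apply (intro nn_integral_cong)
    using assms by (auto simp: ennreal_mult' split: split_indicator)
  finally show ?thesis unfolding nu_def .
qed

lemma nu_0: "nu P 0 x T = indicator T []"
proof -
  have "nu P 0 x T = (\<integral>\<^sup>+ ys. indicator T [] * indicator {[]} (ys::nat list) \<partial>count_space UNIV)"
    unfolding nu_def by (intro nn_integral_cong) (auto split: split_indicator)
  also have "\<dots> = indicator T []" by (subst nn_integral_cmult_indicator) auto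
  finally show ?thesis .
qed

lemma nu_mono: "T \<subseteq> T' \<Longrightarrow> nu P N x T \<le> nu P N x T'"
  unfolding nu_def by (intro nn_integral_mono) (auto split: split_indicator)

lemma P_int:
  assumes "stochastic_matrix P"
  shows "(\<integral>\<^sup>+ y. ennreal (P x y) \<partial>count_space UNIV) = 1"
proof -
  have s: "(\<lambda>k. P x k) sums 1" and nn: "\<And>k. 0 \<le> P x k" using assms unfolding stochastic_matrix_def by auto
  have "(\<integral>\<^sup>+ y. ennreal (P x y) \<partial>count_space UNIV) = (\<Sum>y. ennreal (P x y))"
    by (rule nn_integral_count_space_nat)
  also have "\<dots> = ennreal (\<Sum>y. P x y)" using s nn by (intro suminf_ennreal2) (auto simp: sums_iff)
  also have "\<dots> = 1" using s by (simp add: sums_iff)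
  finally show ?thesis .
qed

lemma nu_UNIV:
  assumes "stochastic_matrix P"
  shows "nu P N x UNIV = 1"
proof (induction N arbitrary: x)
  case 0 then show ?case by (simp add: nu_0)
next
  case (Suc N)
  have nn: "\<And>y. 0 \<le> P x y" using assms unfolding stochastic_matrix_def by auto
  show ?case using Suc P_int[OF assms, of x] by (simp add: nu_Suc[of P x, OF nn])
qed

lemma nu_le1:
  assumes "stochastic_matrix P"
  shows "nu P N x T \<le> 1"
  using nu_mono[of T UNIV P N x] nu_UNIV[OF assms] by simp




lemma chain_nu:
  assumes ch: "markov_chain_from P M X x" and nnP: "\<And>y. 0 \<le> P x y"
  shows "emeasure M {\<omega>\<in>space M. map (\<lambda>j. X j \<omega>) [0..<Suc N] \<in> S} = nu P N x {ys. x#ys \<in> S}"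
proof -
  interpret prob_space M using ch unfolding markov_chain_from_def by auto
  have Xm[measurable]: "\<And>n. X n \<in> M \<rightarrow>\<^sub>M count_space UNIV" using ch unfolding markov_chain_from_def by auto
  have fdd: "\<And>xs. measure M {\<omega> \<in> space M. \<forall>j < length xs. X j \<omega> = xs ! j} =
        (case xs of [] \<Rightarrow> 1 | y # ys \<Rightarrow> (if y = x then path_weight P y ys else 0))"
    using ch unfolding markov_chain_from_def by auto
  define C where "C xs = {\<omega> \<in> space M. \<forall>j < length xs. X j \<omega> = xs ! j}" for xs :: "nat list"
  define I where "I = {xs. length xs = Suc N \<and> xs \<in> S}"
  have Cm: "C xs \<in> sets M" for xs unfolding C_def by measurable
  have eq: "{\<omega>\<in>space M. map (\<lambda>j. X j \<omega>) [0..<Suc N] \<in> S} = \<Union>(C ` I)"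
  proof safe
    fix \<omega> assume "\<omega> \<in> space M" "map (\<lambda>j. X j \<omega>) [0..<Suc N] \<in> S"
    then show "\<omega> \<in> \<Union>(C ` I)"
      by (intro UN_I[of "map (\<lambda>j. X j \<omega>) [0..<Suc N]"]) (auto simp: I_def C_def simp del: upt_Suc)
  next
    fix \<omega> xs assume "xs \<in> I" "\<omega> \<in> C xs"
    then have "map (\<lambda>j. X j \<omega>) [0..<Suc N] = xs"
      by (auto simp: I_def C_def simp del: upt_Suc intro!: nth_equalityI)
    with \<open>xs \<in> I\<close> show "map (\<lambda>j. X j \<omega>) [0..<Suc N] \<in> S" by (auto simp: I_def)
  qed (auto simp: C_def)
  have disj: "disjoint_family_on C I"
    unfolding disjoint_family_on_def I_def C_def
    by (auto intro!: nth_equalityI)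
  have "emeasure M (\<Union>(C ` I)) = (\<integral>\<^sup>+xs. emeasure M (C xs) \<partial>count_space I)"
    by (rule emeasure_UN_countable[OF Cm _ disj]) auto
  also have "\<dots> = (\<integral>\<^sup>+xs. ennreal (case xs of [] \<Rightarrow> 1 | y # ys \<Rightarrow> (if y = x then path_weight P y ys else 0)) * indicator S xs * indicator {zs. length zs = Suc N} xs \<partial>count_space UNIV)"
    by (subst nn_integral_count_space_indicator)
       (auto intro!: nn_integral_cong simp: emeasure_eq_measure fdd[folded C_def] I_def split: split_indicator)
  also have "\<dots> = (\<integral>\<^sup>+ y. \<integral>\<^sup>+ ys. ennreal (if y = x then path_weight P y ys else 0) * indicator S (y#ys) * indicator {ys. length ys = N} ys \<partial>count_space UNIV \<partial>count_space UNIV)"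
    by (subst split_len) simp
  also have "\<dots> = (\<integral>\<^sup>+ y. nu P N x {ys. x#ys \<in> S} * indicator {x} y \<partial>count_space UNIV)"
    unfolding nu_def
    by (intro nn_integral_cong) (auto intro!: nn_integral_cong split: split_indicator)
  also have "\<dots> = nu P N x {ys. x#ys \<in> S}"
    by (subst nn_integral_cmult_indicator) auto
  finally show ?thesis using eq by simp
qed




lemma summable_PG:
  assumes P: "stochastic_matrix P" and G: "\<And>k. 0 \<le> G k" "\<And>k. G k \<le> B"
  shows "summable (\<lambda>k. P j k * G k)"
proof (rule summable_comparison_test)
  have s: "(\<lambda>k. P j k) sums 1" and nn: "\<And>k. 0 \<le> P j k" using P unfolding stochastic_matrix_def by auto
  show "summable (\<lambda>k. P j k * B)" using s by (intro summable_mult2) (auto simp: sums_iff)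
  show "\<exists>N. \<forall>n\<ge>N. norm (P j n * G n) \<le> P j n * B"
    using nn G by (auto intro!: mult_left_mono)
qed

lemma int_ennreal_sum:
  assumes "\<And>k. 0 \<le> f k" "summable f"
  shows "(\<integral>\<^sup>+ y. ennreal (f y) \<partial>count_space UNIV) = ennreal (\<Sum>y. f y)"
  using assms by (simp add: nn_integral_count_space_nat suminf_ennreal2)

lemma hit_bound:
  assumes P: "stochastic_matrix P" and Gpos: "\<And>k. 0 < G k"
    and Gmono: "\<And>j k. j \<le> k \<Longrightarrow> G k \<le> G j"
    and super: "\<And>j. (\<Sum>k. P j k * G k) \<le> G j"
  shows "nu P N x {ys. i \<in> set (x#ys)} \<le> ennreal (G x / G i)"
proof (induction N arbitrary: x)
  case 0
  show ?case using Gpos[of x] Gpos[of i] by (auto simp: nu_0 split: split_indicator)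
next
  case (Suc N)
  show ?case
  proof (cases "x = i")
    case True
    then show ?thesis using nu_le1[OF P] Gpos[of i] by simp
  next
    case False
    have nn: "\<And>y. 0 \<le> P x y" using P unfolding stochastic_matrix_def by auto
    have "nu P (Suc N) x {ys. i \<in> set (x#ys)} = (\<integral>\<^sup>+ y. ennreal (P x y) * nu P N y {ys. i \<in> set (y#ys)} \<partial>count_space UNIV)"
      using False by (simp add: nu_Suc[of P x, OF nn])
    also have "\<dots> \<le> (\<integral>\<^sup>+ y. ennreal (P x y * (G y / G i)) \<partial>count_space UNIV)"
    proof (intro nn_integral_mono)
      fix y
      show "ennreal (P x y) * nu P N y {ys. i \<in> set (y#ys)} \<le> ennreal (P x y * (G y / G i))"
        unfolding ennreal_mult'[OF nn] by (intro mult_left_mono Suc.IH) auto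
    qed
    also have "\<dots> = ennreal (\<Sum>y. P x y * (G y / G i))"
    proof (rule int_ennreal_sum)
      show "\<And>k. 0 \<le> P x k * (G k / G i)" using nn Gpos by (simp add: less_imp_le)
      have "summable (\<lambda>k. P x k * G k)"
        by (rule summable_PG[OF P, of G "G 0"]) (use Gpos Gmono in \<open>auto simp: less_imp_le\<close>)
      then show "summable (\<lambda>k. P x k * (G k / G i))"
        using summable_divide[of "\<lambda>k. P x k * G k" "G i"] by (simp add: field_simps)
    qed
    also have "\<dots> \<le> ennreal (G x / G i)"
    proof (intro ennreal_leI)
      have "summable (\<lambda>k. P x k * G k)"
        by (rule summable_PG[OF P, of G "G 0"]) (use Gpos Gmono in \<open>auto simp: less_imp_le\<close>)
      then have "(\<Sum>y. P x y * (G y / G i)) = (\<Sum>y. P x y * G y) / G i"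
        using suminf_divide[of "\<lambda>k. P x k * G k" "G i"] by (simp add: field_simps)
      also have "\<dots> \<le> G x / G i" using super[of x] Gpos[of i] by (simp add: divide_right_mono)
      finally show "(\<Sum>y. P x y * (G y / G i)) \<le> G x / G i" .
    qed
    finally show ?thesis .
  qed
qed




lemma return_bound:
  assumes P: "stochastic_matrix P" and Gpos: "\<And>k. 0 < G k"
    and Gmono: "\<And>j k. j \<le> k \<Longrightarrow> G k \<le> G j"
    and super: "\<And>j. (\<Sum>k. P j k * G k) \<le> G j"
    and ratio: "G (Suc i) / G i \<le> p1" and p1: "p1 < 1"
    and p2: "p2 \<le> (\<Sum>y. P i y * indicator {Suc i..} y)"
  shows "(\<integral>\<^sup>+ y. ennreal (P i y) * nu P N y {ys. i \<in> set (y#ys)} \<partial>count_space UNIV) \<le> ennreal (1 - p2 * (1 - p1))"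
proof -
  have nn: "\<And>y. 0 \<le> P i y" and s: "(\<lambda>k. P i k) sums 1" using P unfolding stochastic_matrix_def by auto
  have p1pos: "0 \<le> p1" using ratio Gpos[of "Suc i"] Gpos[of i]
    by (smt (verit) divide_pos_pos)
  define h where "h y = (if y \<le> i then 1 else p1)" for y
  have h01: "0 \<le> h y" "h y \<le> 1" for y using p1pos p1 by (auto simp: h_def)
  have "(\<integral>\<^sup>+ y. ennreal (P i y) * nu P N y {ys. i \<in> set (y#ys)} \<partial>count_space UNIV) \<le> (\<integral>\<^sup>+ y. ennreal (P i y * h y) \<partial>count_space UNIV)"
  proof (intro nn_integral_mono)
    fix y
    have "nu P N y {ys. i \<in> set (y#ys)} \<le> ennreal (h y)"
    proof (cases "y \<le> i")
      case True then show ?thesis using nu_le1[OF P] by (simp add: h_def)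
    next
      case False
      have "nu P N y {ys. i \<in> set (y#ys)} \<le> ennreal (G y / G i)"
        by (rule hit_bound[OF P Gpos Gmono super])
      also have "\<dots> \<le> ennreal p1"
      proof (intro ennreal_leI)
        have "G y / G i \<le> G (Suc i) / G i" using False Gmono[of "Suc i" y] Gpos[of i]
          by (simp add: divide_right_mono)
        then show "G y / G i \<le> p1" using ratio by linarith
      qed
      finally show ?thesis using False by (simp add: h_def)
    qed
    then show "ennreal (P i y) * nu P N y {ys. i \<in> set (y#ys)} \<le> ennreal (P i y * h y)"
      unfolding ennreal_mult'[OF nn] by (intro mult_left_mono) auto
  qed
  also have "\<dots> = ennreal (\<Sum>y. P i y * h y)"
    by (rule int_ennreal_sum) (use nn h01 summable_PG[OF P, of h 1] in auto)
  also have "\<dots> \<le> ennreal (1 - p2 * (1 - p1))"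
  proof (intro ennreal_leI)
    have sa: "summable (\<lambda>y. P i y * indicator {Suc i..} y)"
      by (rule summable_PG[OF P, of _ 1]) (auto split: split_indicator)
    have sP: "summable (\<lambda>y. P i y)" using s by (simp add: sums_iff)
    have eqh: "(\<lambda>y. P i y * h y) = (\<lambda>y. P i y - (1 - p1) * (P i y * indicator {Suc i..} y))"
      by (auto simp: h_def fun_eq_iff split: split_indicator) (simp add: algebra_simps)
    have "(\<Sum>y. P i y * h y) = (\<Sum>y. P i y) - (1 - p1) * (\<Sum>y. P i y * indicator {Suc i..} y)"
      unfolding eqh suminf_diff[OF sP summable_mult[OF sa], symmetric] suminf_mult[OF sa] ..
    also have "\<dots> = 1 - (1 - p1) * (\<Sum>y. P i y * indicator {Suc i..} y)" using s by (simp add: sums_iff)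
    also have "\<dots> \<le> 1 - p2 * (1 - p1)" using p2 p1 by (simp add: mult.commute mult_left_mono)
    finally show "(\<Sum>y. P i y * h y) \<le> 1 - p2 * (1 - p1)" .
  qed
  finally show ?thesis .
qed




lemma cl_same: "count_list (a#zs) a = Suc (count_list zs a)" by simp

lemma vis_bound:
  assumes P: "stochastic_matrix P"
    and ret: "\<And>N. (\<integral>\<^sup>+ y. ennreal (P i y) * nu P N y {ys. i \<in> set (y#ys)} \<partial>count_space UNIV) \<le> ennreal q"
  shows "nu P N x {ys. Suc m \<le> count_list (x#ys) i} \<le> nu P N x {ys. i \<in> set (x#ys)} * ennreal q ^ m"
proof (induction N arbitrary: x m)
  case 0
  show ?case by (cases m) (auto simp: nu_0 split: split_indicator)
next
  case (Suc N)
  have nn: "\<And>x y. 0 \<le> P x y" using P unfolding stochastic_matrix_def by auto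
  show ?case
  proof (cases "x = i")
    case False
    have "nu P (Suc N) x {ys. Suc m \<le> count_list (x#ys) i} = (\<integral>\<^sup>+ y. ennreal (P x y) * nu P N y {ys. Suc m \<le> count_list (y#ys) i} \<partial>count_space UNIV)"
      using False by (simp add: nu_Suc[of P x, OF nn])
    also have "\<dots> \<le> (\<integral>\<^sup>+ y. (ennreal (P x y) * nu P N y {ys. i \<in> set (y#ys)}) * ennreal q ^ m \<partial>count_space UNIV)"
    proof (intro nn_integral_mono)
      fix y show "ennreal (P x y) * nu P N y {ys. Suc m \<le> count_list (y#ys) i} \<le> (ennreal (P x y) * nu P N y {ys. i \<in> set (y#ys)}) * ennreal q ^ m"
        using Suc.IH[of y m] by (simp add: mult.assoc mult_left_mono)
    qed
    also have "\<dots> = (\<integral>\<^sup>+ y. ennreal (P x y) * nu P N y {ys. i \<in> set (y#ys)} \<partial>count_space UNIV) * ennreal q ^ m"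
      by (rule nn_integral_multc) simp
    also have "\<dots> = nu P (Suc N) x {ys. i \<in> set (x#ys)} * ennreal q ^ m"
      using False by (simp add: nu_Suc[of P x, OF nn])
    finally show ?thesis .
  next
    case True
    have hit1: "nu P (Suc N) x {ys. i \<in> set (x#ys)} = 1" using True nu_UNIV[OF P] by simp
    show ?thesis
    proof (cases m)
      case 0 then show ?thesis using hit1 nu_le1[OF P] by simp
    next
      case (Suc m')
      have "nu P (Suc N) x {ys. Suc m \<le> count_list (x#ys) i} = (\<integral>\<^sup>+ y. ennreal (P i y) * nu P N y {ys. Suc m' \<le> count_list (y#ys) i} \<partial>count_space UNIV)"
        using True Suc by (subst nu_Suc[of P x, OF nn]) (simp del: count_list.simps add: cl_same)
      also have "\<dots> \<le> (\<integral>\<^sup>+ y. (ennreal (P i y) * nu P N y {ys. i \<in> set (y#ys)}) * ennreal q ^ m' \<partial>count_space UNIV)"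
      proof (intro nn_integral_mono)
        fix y show "ennreal (P i y) * nu P N y {ys. Suc m' \<le> count_list (y#ys) i} \<le> (ennreal (P i y) * nu P N y {ys. i \<in> set (y#ys)}) * ennreal q ^ m'"
          using Suc.IH[of y m'] by (simp add: mult.assoc mult_left_mono)
      qed
      also have "\<dots> = (\<integral>\<^sup>+ y. ennreal (P i y) * nu P N y {ys. i \<in> set (y#ys)} \<partial>count_space UNIV) * ennreal q ^ m'"
        by (rule nn_integral_multc) simp
      also have "\<dots> \<le> ennreal q * ennreal q ^ m'"
        by (intro mult_right_mono ret) simp
      also have "\<dots> = nu P (Suc N) x {ys. i \<in> set (x#ys)} * ennreal q ^ m" using hit1 Suc by simp
      finally show ?thesis .
    qed
  qed
qed




lemma chain_set_sets:
  assumes ch: "markov_chain_from P M X x"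
  shows "{\<omega>\<in>space M. map (\<lambda>j. X j \<omega>) [0..<Suc N] \<in> S} \<in> sets M"
proof -
  have Xm[measurable]: "\<And>n. X n \<in> M \<rightarrow>\<^sub>M count_space UNIV" using ch unfolding markov_chain_from_def by auto
  define C where "C xs = {\<omega> \<in> space M. \<forall>j < length xs. X j \<omega> = xs ! j}" for xs :: "nat list"
  define I where "I = {xs. length xs = Suc N \<and> xs \<in> S}"
  have Cm: "C xs \<in> sets M" for xs unfolding C_def by measurable
  have eq: "{\<omega>\<in>space M. map (\<lambda>j. X j \<omega>) [0..<Suc N] \<in> S} = \<Union>(C ` I)"
  proof safe
    fix \<omega> assume "\<omega> \<in> space M" "map (\<lambda>j. X j \<omega>) [0..<Suc N] \<in> S"
    then show "\<omega> \<in> \<Union>(C ` I)"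
      by (intro UN_I[of "map (\<lambda>j. X j \<omega>) [0..<Suc N]"]) (auto simp: I_def C_def simp del: upt_Suc)
  next
    fix \<omega> xs assume "xs \<in> I" "\<omega> \<in> C xs"
    then have "map (\<lambda>j. X j \<omega>) [0..<Suc N] = xs"
      by (auto simp: I_def C_def simp del: upt_Suc intro!: nth_equalityI)
    with \<open>xs \<in> I\<close> show "map (\<lambda>j. X j \<omega>) [0..<Suc N] \<in> S" by (auto simp: I_def)
  qed (auto simp: C_def)
  show ?thesis unfolding eq by (rule sets.countable_UN') (auto intro: Cm)
qed

lemma count_list_map_upt: "count_list (map f [0..<n]) a = card {j. j < n \<and> f j = a}"
proof (induction n)
  case 0 then show ?case by simp
next
  case (Suc n)
  have "{j. j < Suc n \<and> f j = a} = {j. j < n \<and> f j = a} \<union> (if f n = a then {n} else {})"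
    by (auto simp: less_Suc_eq)
  then show ?case using Suc by (auto simp: card_insert_if)
qed

lemma lt_in_union:
  assumes "enat (Suc m) \<le> local_time X i \<omega>"
  shows "\<exists>N. Suc m \<le> count_list (map (\<lambda>j. X j \<omega>) [0..<Suc N]) i"
proof -
  define V where "V = {n. X n \<omega> = i}"
  obtain F where F: "F \<subseteq> V" "finite F" "card F = Suc m"
  proof (cases "finite V")
    case True
    then have "Suc m \<le> card V" using assms by (simp add: local_time_def V_def)
    then show ?thesis using that True by (meson obtain_subset_with_card_n rev_finite_subset)
  next
    case False
    then show ?thesis using that infinite_arbitrarily_large by blast
  qed
  have Fne: "F \<noteq> {}" using F by auto
  define N where "N = Max F"
  have "F \<subseteq> {j. j < Suc N \<and> X j \<omega> = i}"
    using F Fne by (auto simp: N_def V_def less_Suc_eq_le)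
  then have "card F \<le> card {j. j < Suc N \<and> X j \<omega> = i}" by (intro card_mono) auto
  then have "Suc m \<le> count_list (map (\<lambda>j. X j \<omega>) [0..<Suc N]) i"
    using F by (simp only: count_list_map_upt)
  then show ?thesis by blast
qed




theorem proposition5:
  fixes P :: "nat \<Rightarrow> nat \<Rightarrow> real"
    and M :: "nat \<Rightarrow> 'a measure"
    and X :: "nat \<Rightarrow> 'a \<Rightarrow> nat"
    and g :: "nat \<Rightarrow> nat \<Rightarrow> real"
  assumes P: "stochastic_matrix P"
    and chain: "\<And>i. markov_chain_from P (M i) X i"
    and g_pos: "\<And>i k. 0 < g i k"
    and g_noninc: "\<And>i j k. j \<le> k \<Longrightarrow> g i k \<le> g i j"
    and g_super: "\<And>i j. (\<Sum>k. P j k * g i k) \<le> g i j"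
    and p1: "(SUP i\<in>{1..}. g i i / g i (i - 1)) < 1"
    and p2: "(INF i. measure (M i) {\<omega> \<in> space (M i). X 1 \<omega> \<ge> i + 1}) > 0"
  shows "\<exists>\<gamma>>0. (SUP i. \<integral>\<^sup>+ \<omega>. exp_enat \<gamma> (local_time X i \<omega>) \<partial>M i) < \<infinity>"
proof -
  define a where "a = (SUP i\<in>{1..}. g i i / g i (i - 1))"
  define b where "b = (INF i. measure (M i) {\<omega> \<in> space (M i). X 1 \<omega> \<ge> i + 1})"
  define q where "q = 1 - b * (1 - a)"
  have nnP: "\<And>x y. 0 \<le> P x y" using P unfolding stochastic_matrix_def by auto
  have bdd: "bdd_above ((\<lambda>i. g i i / g i (i - 1)) ` {1..})"
  proof (rule bdd_aboveI2)
    fix i :: nat show "g i i / g i (i - 1) \<le> 1"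
      using g_noninc[of "i - 1" i i] g_pos[of i "i - 1"] by simp
  qed
  have ratio: "g (Suc i) (Suc i) / g (Suc i) i \<le> a" for i
  proof -
    have "g (Suc i) (Suc i) / g (Suc i) (Suc i - 1) \<le> a"
      unfolding a_def by (rule cSUP_upper[OF _ bdd]) simp
    then show ?thesis by simp
  qed
  have apos: "0 < a"
    using ratio[of 0] divide_pos_pos[OF g_pos[of "Suc 0" "Suc 0"] g_pos[of "Suc 0" 0]] by linarith
  have a1: "a < 1" using p1 a_def by simp
  have meas: "measure (M i) {\<omega> \<in> space (M i). X 1 \<omega> \<ge> i + 1} = (\<Sum>y. P i y * indicator {Suc i..} y)" for i
  proof -
    interpret prob_space "M i" using chain[of i] unfolding markov_chain_from_def by auto
    have "{\<omega> \<in> space (M i). X 1 \<omega> \<ge> i + 1} = {\<omega>\<in>space (M i). map (\<lambda>j. X j \<omega>) [0..<Suc 1] \<in> {xs. Suc i \<le> xs ! 1}}"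
      by simp
    then have "emeasure (M i) {\<omega> \<in> space (M i). X 1 \<omega> \<ge> i + 1} = nu P 1 i {ys. i # ys \<in> {xs. Suc i \<le> xs ! 1}}"
      using chain_nu[OF chain[of i] nnP, of 1 "{xs. Suc i \<le> xs ! 1}"] by (simp only:)
    also have "\<dots> = (\<integral>\<^sup>+ y. ennreal (P i y * indicator {Suc i..} y) \<partial>count_space UNIV)"
      apply (simp only: One_nat_def)
      apply (subst nu_Suc[of P i, OF nnP])
      by (auto simp: nu_0 intro!: nn_integral_cong split: split_indicator)
    also have "\<dots> = ennreal (\<Sum>y. P i y * indicator {Suc i..} y)"
      by (rule int_ennreal_sum) (use nnP summable_PG[OF P, of "indicator {Suc i..}" 1] in \<open>auto split: split_indicator\<close>)
    finally have "emeasure (M i) {\<omega> \<in> space (M i). X 1 \<omega> \<ge> i + 1} = ennreal (\<Sum>y. P i y * indicator {Suc i..} y)" .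
    moreover have "0 \<le> (\<Sum>y. P i y * indicator {Suc i..} y)"
      using nnP by (intro suminf_nonneg summable_PG[OF P, of _ 1]) (auto split: split_indicator)
    ultimately show ?thesis by (simp add: measure_def)
  qed
  have bddb: "bdd_below ((\<lambda>i. measure (M i) {\<omega> \<in> space (M i). X 1 \<omega> \<ge> i + 1}) ` UNIV)"
    by (rule bdd_belowI2[of _ 0]) simp
  have b_le: "b \<le> (\<Sum>y. P i y * indicator {Suc i..} y)" for i
    using cINF_lower[OF bddb, of i] meas[of i] unfolding b_def by simp
  have bpos: "0 < b" using p2 b_def by simp
  have b1: "b \<le> 1"
  proof -
    interpret prob_space "M 0" using chain[of 0] unfolding markov_chain_from_def by auto
    have "b \<le> measure (M 0) {\<omega> \<in> space (M 0). X 1 \<omega> \<ge> 0 + 1}" using b_le[of 0] meas[of 0] by simp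
    also have "\<dots> \<le> 1" by simp
    finally show ?thesis .
  qed
  have q0: "0 \<le> q" unfolding q_def using b1 a1 apos
    by (smt (verit) mult_le_one)
  have q1: "q < 1" unfolding q_def using bpos a1 by simp
  have tail: "emeasure (M i) {\<omega>\<in>space (M i). Suc m \<le> count_list (map (\<lambda>j. X j \<omega>) [0..<Suc N]) i} \<le> ennreal q ^ m" for i m N
  proof -
    have ret: "\<And>N. (\<integral>\<^sup>+ y. ennreal (P i y) * nu P N y {ys. i \<in> set (y#ys)} \<partial>count_space UNIV) \<le> ennreal q"
      unfolding q_def
      by (rule return_bound[OF P g_pos g_noninc g_super ratio a1 b_le])
    have "emeasure (M i) {\<omega>\<in>space (M i). Suc m \<le> count_list (map (\<lambda>j. X j \<omega>) [0..<Suc N]) i}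
        = nu P N i {ys. i#ys \<in> {zs. Suc m \<le> count_list zs i}}"
      using chain_nu[OF chain[of i] nnP, of N "{zs. Suc m \<le> count_list zs i}"] by simp
    also have "\<dots> \<le> nu P N i {ys. i \<in> set (i#ys)} * ennreal q ^ m"
      using vis_bound[OF P ret, of N i m] by simp
    also have "\<dots> \<le> 1 * ennreal q ^ m"
      by (intro mult_right_mono nu_le1[OF P]) simp
    finally show ?thesis by simp
  qed
  define A where "A i m N = {\<omega>\<in>space (M i). Suc m \<le> count_list (map (\<lambda>j. X j \<omega>) [0..<Suc N]) i}" for i m N
  define B where "B i m = (\<Union>N. A i m N)" for i m
  have Asets: "A i m N \<in> sets (M i)" for i m N
    unfolding A_def using chain_set_sets[OF chain[of i], of N "{zs. Suc m \<le> count_list zs i}"] by simp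
  have Bsets: "B i m \<in> sets (M i)" for i m
    unfolding B_def using Asets by auto
  have Binc: "incseq (A i m)" for i m
  proof (rule incseq_SucI)
    fix N show "A i m N \<subseteq> A i m (Suc N)"
      unfolding A_def by (auto simp del: upt_Suc simp: upt_Suc[of 0 "Suc N"])
  qed
  have Bbound: "emeasure (M i) (B i m) \<le> ennreal q ^ m" for i m
  proof -
    have "emeasure (M i) (B i m) = (SUP N. emeasure (M i) (A i m N))"
      unfolding B_def by (rule SUP_emeasure_incseq[symmetric]) (use Asets Binc in auto)
    also have "\<dots> \<le> ennreal q ^ m" using tail unfolding A_def by (intro SUP_least) auto
    finally show ?thesis .
  qed
  have inB: "\<omega> \<in> B i m" if "\<omega> \<in> space (M i)" "enat (Suc m) \<le> local_time X i \<omega>" for i m \<omega>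
    using lt_in_union[OF that(2)] that(1) unfolding B_def A_def by auto
  define \<gamma> where "\<gamma> = ln (2 / (1 + q))"
  have eg: "exp \<gamma> = 2 / (1 + q)" unfolding \<gamma>_def using q0 by simp
  have gpos: "0 < \<gamma>" unfolding \<gamma>_def using q0 q1 by simp
  define r where "r = exp \<gamma> * q"
  have r0: "0 \<le> r" unfolding r_def using q0 by simp
  have r1: "r < 1" unfolding r_def eg using q0 q1 by (simp add: field_simps)
  define c where "c m = exp \<gamma> ^ Suc m" for m :: nat
  define C where "C = 1 + ennreal (\<Sum>m. exp \<gamma> * r ^ m)"
  have Cfin: "C < \<infinity>" unfolding C_def by simp
  have pw: "exp_enat \<gamma> (local_time X i \<omega>) \<le> 1 + (\<Sum>m. ennreal (c m) * indicator (B i m) \<omega>)"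
    if \<omega>: "\<omega> \<in> space (M i)" for i \<omega>
  proof (cases "local_time X i \<omega>")
    case (enat L)
    show ?thesis
    proof (cases L)
      case 0 then show ?thesis using enat by (simp add: exp_enat_def)
    next
      case (Suc m)
      have "\<omega> \<in> B i m" using inB[OF \<omega>] enat Suc by simp
      have "exp_enat \<gamma> (local_time X i \<omega>) = ennreal (c m) * indicator (B i m) \<omega>"
        using enat Suc \<open>\<omega> \<in> B i m\<close> unfolding exp_enat_def c_def
        by (simp add: exp_of_nat_mult[symmetric] mult.commute distrib_left exp_add)
      also have "\<dots> \<le> (\<Sum>m. ennreal (c m) * indicator (B i m) \<omega>)"
      proof -
        have "(\<Sum>n\<in>{m}. ennreal (c n) * indicator (B i n) \<omega>) \<le> (\<Sum>n. ennreal (c n) * indicator (B i n) \<omega>)"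
          by (rule sum_le_suminf) (auto intro: summableI)
        then show ?thesis by (simp only: sum.insert_remove finite.emptyI empty_Diff sum.empty add_0_right)
      qed
      also have "\<dots> \<le> 1 + (\<Sum>m. ennreal (c m) * indicator (B i m) \<omega>)" by simp
      finally show ?thesis .
    qed
  next
    case infinity
    have "\<omega> \<in> B i m" for m using inB[OF \<omega>] infinity by simp
    then have eqs: "(\<Sum>m. ennreal (c m) * indicator (B i m) \<omega>) = (\<Sum>m. ennreal (c m))" by simp
    have "(\<Sum>m. ennreal (c m)) = top"
    proof (rule ccontr)
      assume "(\<Sum>m. ennreal (c m)) \<noteq> top"
      then have "summable c" by (rule summable_suminf_not_top[rotated]) (simp add: c_def)
      moreover have "norm (1::real) \<le> c m" for m
      proof -
        have "1 \<le> exp \<gamma>" using gpos by simp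
        then have "1 \<le> exp \<gamma> ^ Suc m" by (rule one_le_power)
        then show ?thesis unfolding c_def by simp
      qed
      ultimately have "summable (\<lambda>_::nat. 1::real)"
        by (intro summable_comparison_test[of "\<lambda>_. 1" c]) auto
      then show False by (simp add: summable_const_iff)
    qed
    then show ?thesis using eqs by simp
  qed
  have int_le: "(\<integral>\<^sup>+ \<omega>. exp_enat \<gamma> (local_time X i \<omega>) \<partial>M i) \<le> C" for i
  proof -
    interpret prob_space "M i" using chain[of i] unfolding markov_chain_from_def by auto
    have "(\<integral>\<^sup>+ \<omega>. exp_enat \<gamma> (local_time X i \<omega>) \<partial>M i) \<le> (\<integral>\<^sup>+ \<omega>. 1 + (\<Sum>m. ennreal (c m) * indicator (B i m) \<omega>) \<partial>M i)"
      using pw by (intro nn_integral_mono) auto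
    also have "\<dots> = (\<integral>\<^sup>+ \<omega>. 1 \<partial>M i) + (\<integral>\<^sup>+ \<omega>. (\<Sum>m. ennreal (c m) * indicator (B i m) \<omega>) \<partial>M i)"
      using Bsets by (intro nn_integral_add) auto
    also have "\<dots> = 1 + (\<Sum>m. ennreal (c m) * emeasure (M i) (B i m))"
      using Bsets by (simp add: nn_integral_suminf emeasure_space_1 nn_integral_cmult_indicator)
    also have "\<dots> \<le> 1 + (\<Sum>m. ennreal (c m) * ennreal q ^ m)"
      by (intro add_left_mono suminf_le mult_left_mono Bbound) auto
    also have "(\<Sum>m. ennreal (c m) * ennreal q ^ m) = (\<Sum>m. ennreal (exp \<gamma> * r ^ m))"
    proof (rule suminf_cong)
      fix m
      have "ennreal (c m) * ennreal q ^ m = ennreal (c m) * ennreal (q ^ m)" using q0 by (simp add: ennreal_power)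
      also have "\<dots> = ennreal (c m * q ^ m)" using q0 by (simp add: ennreal_mult'')
      also have "\<dots> = ennreal (exp \<gamma> * r ^ m)" unfolding c_def r_def by (simp add: power_mult_distrib mult_ac)
      finally show "ennreal (c m) * ennreal q ^ m = ennreal (exp \<gamma> * r ^ m)" .
    qed
    also have "\<dots> = ennreal (\<Sum>m. exp \<gamma> * r ^ m)"
      using r0 r1 by (intro suminf_ennreal2) (auto intro!: summable_mult summable_geometric)
    finally show ?thesis unfolding C_def .
  qed
  have "(SUP i. \<integral>\<^sup>+ \<omega>. exp_enat \<gamma> (local_time X i \<omega>) \<partial>M i) \<le> C"
    using int_le by (intro SUP_least) auto
  then show ?thesis using gpos Cfin by (intro exI[of _ \<gamma>]) auto
qed


end
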